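(* Let $n$ be large, $R$ an integer with $1\le R\le\frac{\log n}{24\log\log n}$, $L=6R$ and $\eta=n^{1/(2L)}$. Let $\ell\in\{0,\ldots,L\}$ and $q$ an integer with $q\in\left[\eta^3,\frac{\eta^{2\ell-1}}{2^7}\right]$. Let $\sigma^A$ be any probability distribution with support $S_\ell^A$. If $\mu^A\sim\sigma^A$ and, conditionally on $\mu^A$, $\Theta=(\Theta_1,\ldots,\Theta_q)\sim\mathrm{Ber}(\mu^A)^{\otimes q}$, then $\Pr[\Theta\notin G_\ell^A]\le n^{-10}$.
   Context: For $\ell\in\{0,\ldots,L\}$, $S_\ell^A$ is the set of all numbers $\frac12+2\sum_{k:\,1\le2k+1\le\ell}\eta^{-(2k+1)}+2\sum_{k:\,\ell<2k+1\le L}X_{2k+1}\eta^{-(2k+1)}$ with all $X_{2k+1}\in\{0,1\}$. For $\theta\in\{0,1\}^q$ and $x\in(0,1)$, $p(\theta\mid x)=\prod_{j=1}^qx^{\theta_j}(1-x)^{1-\theta_j}$. $G_\ell^A$ is the set of sequences $\theta$ (of any length) such that for all $x,y\in S_\ell^A$, $\frac{p(\theta\mid x)}{p(\theta\mid y)}\in[e^{-4/\eta},e^{4/\eta}]$. $\mathrm{Ber}(x)$ denotes the Bernoulli distribution with mean $x$. *)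

theory Defs
  imports "HOL-Probability.Probability"
begin

text \<open>The set S_l^A (for parameters eta, L, l). Odd indices j = 2k+1.
  The free bits X_j are modelled by a function X :: nat => bool (only the
  values at odd j with l < j <= L matter).\<close>
definition SA :: "real \<Rightarrow> nat \<Rightarrow> nat \<Rightarrow> real set" where
  "SA \<eta> L l = {1/2 + 2 * (\<Sum>j\<in>{j. odd j \<and> 1 \<le> j \<and> j \<le> l}. \<eta> powr (- real j))
      + 2 * (\<Sum>j\<in>{j. odd j \<and> l < j \<and> j \<le> L}. (if X j then 1 else 0) * \<eta> powr (- real j))
      | X :: nat \<Rightarrow> bool. True}"

definition pcond :: "bool list \<Rightarrow> real \<Rightarrow> real" where
  "pcond \<theta> x = prod_list (map (\<lambda>b. if b then x else 1 - x) \<theta>)"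

definition GA :: "real \<Rightarrow> nat \<Rightarrow> nat \<Rightarrow> bool list set" where
  "GA \<eta> L l = {\<theta>. \<forall>x\<in>SA \<eta> L l. \<forall>y\<in>SA \<eta> L l.
      pcond \<theta> x / pcond \<theta> y \<in> {exp (- 4 / \<eta>) .. exp (4 / \<eta>)}}"

end

theory Submission
  imports Defs
begin


lemma ln_diff_bound:
  fixes x y D :: real
  assumes "0 < a" "a \<le> x" "a \<le> y" "\<bar>x - y\<bar> \<le> D"
  shows "\<bar>ln (x / y)\<bar> \<le> D / a"
proof -
  have xp: "x > 0" "y > 0" using assms by auto
  have "ln (x/y) \<le> x/y - 1" using xp by (intro ln_le_minus_one) auto
  also have "\<dots> = (x - y)/y" using xp by (simp add: field_simps)
  also have "\<dots> \<le> D / a"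
  proof -
    have "(x-y)/y \<le> \<bar>x-y\<bar>/y" using xp by (simp add: divide_right_mono)
    also have "\<dots> \<le> D / y" using xp assms by (simp add: divide_right_mono)
    also have "\<dots> \<le> D / a" using xp assms by (meson abs_ge_zero frac_le order.trans order_refl)
    finally show ?thesis .
  qed
  finally have 1: "ln (x/y) \<le> D/a" .
  have "ln (y/x) \<le> y/x - 1" using xp by (intro ln_le_minus_one) auto
  also have "\<dots> = (y - x)/x" using xp by (simp add: field_simps)
  also have "\<dots> \<le> D / a"
  proof -
    have "(y-x)/x \<le> \<bar>y-x\<bar>/x" using xp by (simp add: divide_right_mono)
    also have "\<dots> \<le> D / x" using xp assms by (simp add: divide_right_mono abs_minus_commute)
    also have "\<dots> \<le> D / a" using xp assms by (meson abs_ge_zero frac_le order.trans order_refl)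
    finally show ?thesis .
  qed
  finally have 2: "ln (y/x) \<le> D/a" .
  have "ln (y/x) = - ln (x/y)" using xp by (simp add: ln_div)
  then show ?thesis using 1 2 by linarith
qed

lemma second_order:
  fixes x y m D :: real
  assumes "1/2 \<le> x" "x \<le> 3/4" "1/2 \<le> y" "y \<le> 3/4" "0 \<le> m" "m \<le> 1"
    "\<bar>x - y\<bar> \<le> D" "\<bar>m - y\<bar> \<le> D"
  shows "m * ln (x/y) + (1 - m) * ln ((1-x)/(1-y)) \<le> 6 * D^2"
proof -
  have "m * ln (x/y) \<le> m * ((x-y)/y)"
    using assms ln_le_minus_one[of "x/y"] by (intro mult_left_mono) (auto simp: field_simps)
  moreover have "(1-m) * ln ((1-x)/(1-y)) \<le> (1-m) * ((y-x)/(1-y))"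
    using assms ln_le_minus_one[of "(1-x)/(1-y)"] by (intro mult_left_mono) (auto simp: field_simps)
  moreover have "m * ((x-y)/y) + (1-m) * ((y-x)/(1-y)) = (x-y)*(m-y)/(y*(1-y))"
    using assms by (simp add: field_simps)
  moreover have "(x-y)*(m-y)/(y*(1-y)) \<le> 6 * D^2"
  proof -
    have "(y-1/4)*(3/4-y) \<ge> 0" using assms by (intro mult_nonneg_nonneg) auto
    moreover have "y*(1-y) - 3/16 = (y-1/4)*(3/4-y)" by (simp add: field_simps)
    ultimately have yy: "y*(1-y) \<ge> 3/16" by linarith
    have "(x-y)*(m-y) \<le> \<bar>x-y\<bar> * \<bar>m-y\<bar>" by (metis abs_ge_self abs_mult)
    also have "\<dots> \<le> D * D" using assms by (intro mult_mono) auto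
    finally have a: "(x-y)*(m-y) \<le> D^2" by (simp add: power2_eq_square)
    show ?thesis
    proof (cases "(x-y)*(m-y) \<le> 0")
      case True
      then have "(x-y)*(m-y)/(y*(1-y)) \<le> 0" using yy by (simp add: divide_nonpos_pos)
      moreover have "(0::real) \<le> 6 * D^2" by simp
      ultimately show ?thesis by linarith
    next
      case False
      have "(x-y)*(m-y)/(y*(1-y)) \<le> D^2 / (3/16)"
        using yy a False by (intro frac_le) auto
      moreover have "D^2 / (3/16) \<le> 6 * D^2" by simp
      ultimately show ?thesis by linarith
    qed
  qed
  ultimately show ?thesis by linarith
qed

lemma core:
  fixes x y m D T :: real and k q :: nat
  assumes "1/2 \<le> x" "x \<le> 3/4" "1/2 \<le> y" "y \<le> 3/4" "1/2 \<le> m" "m \<le> 3/4"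
    "\<bar>x - y\<bar> \<le> D" "\<bar>m - y\<bar> \<le> D" "\<bar>m - x\<bar> \<le> D"
    "\<bar>real k - real q * m\<bar> \<le> T"
  shows "\<bar>real k * ln (x/y) + (real q - real k) * ln ((1-x)/(1-y))\<bar> \<le> 6*D*T + 6*real q*D^2"
proof -
  define a where "a = ln (x/y)"
  define b where "b = ln ((1-x)/(1-y))"
  have D0: "D \<ge> 0" using assms(7) by linarith
  have T0: "T \<ge> 0" using assms(10) by linarith
  have "\<bar>a\<bar> \<le> D/(1/2)" unfolding a_def using assms by (intro ln_diff_bound) auto
  then have ha: "\<bar>a\<bar> \<le> 2*D" by simp
  have "\<bar>b\<bar> \<le> D/(1/4)" unfolding b_def using assms by (intro ln_diff_bound) auto
  then have hb: "\<bar>b\<bar> \<le> 4*D" by simp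
  have dec: "real k * a + (real q - real k) * b = (real k - real q * m) * (a - b) + real q * (m * a + (1-m) * b)"
    by (simp add: algebra_simps)
  have "\<bar>a - b\<bar> \<le> 6 * D" using ha hb by linarith
  then have t1: "\<bar>(real k - real q * m) * (a - b)\<bar> \<le> T * (6 * D)"
    unfolding abs_mult using assms(10) by (intro mult_mono) auto
  have up: "m * a + (1-m) * b \<le> 6 * D^2" unfolding a_def b_def
    using assms by (intro second_order) auto
  have "m * ln (y/x) + (1 - m) * ln ((1-y)/(1-x)) \<le> 6 * D^2"
    using assms by (intro second_order) (auto simp: abs_minus_commute)
  moreover have "ln (y/x) = - a" unfolding a_def using assms by (simp add: ln_div)
  moreover have "ln ((1-y)/(1-x)) = - b" unfolding b_def using assms by (simp add: ln_div)
  ultimately have lo: "m * a + (1-m) * b \<ge> - (6 * D^2)" by simp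
  have t2: "\<bar>real q * (m * a + (1-m) * b)\<bar> \<le> real q * (6 * D^2)"
  proof -
    have "\<bar>m * a + (1-m) * b\<bar> \<le> 6 * D^2" using up lo by linarith
    then show ?thesis unfolding abs_mult by (simp add: mult_left_mono)
  qed
  have "\<bar>real k * a + (real q - real k) * b\<bar> \<le> T * (6 * D) + real q * (6 * D^2)"
    unfolding dec using t1 t2 by linarith
  then show ?thesis unfolding a_def b_def by (simp add: algebra_simps)
qed

lemma pcond_count:
  "pcond \<theta> x = x ^ length (filter id \<theta>) * (1-x) ^ (length \<theta> - length (filter id \<theta>))"
proof (induction \<theta>)
  case Nil
  then show ?case by (simp add: pcond_def)
next
  case (Cons b \<theta>)
  have le: "length (filter id \<theta>) \<le> length \<theta>" by (rule length_filter_le)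
  have p: "pcond (b # \<theta>) x = (if b then x else 1 - x) * pcond \<theta> x" by (simp add: pcond_def)
  show ?case
  proof (cases b)
    case True
    then show ?thesis using p Cons by simp
  next
    case False
    have "Suc (length \<theta>) - length (filter id \<theta>) = Suc (length \<theta> - length (filter id \<theta>))"
      using le by (rule Suc_diff_le)
    then show ?thesis using p Cons False by (simp add: id_def)
  qed
qed

lemma pcond_ratio:
  fixes x y :: real
  assumes "0 < x" "x < 1" "0 < y" "y < 1"
  shows "pcond \<theta> x / pcond \<theta> y = exp (real (length (filter id \<theta>)) * ln (x/y)
      + (real (length \<theta>) - real (length (filter id \<theta>))) * ln ((1-x)/(1-y)))"
proof -
  define k where "k = length (filter id \<theta>)"
  define q where "q = length \<theta>"
  have le: "k \<le> q" unfolding k_def q_def by (rule length_filter_le)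
  have "pcond \<theta> x / pcond \<theta> y = (x/y)^k * ((1-x)/(1-y))^(q-k)"
    unfolding pcond_count k_def[symmetric] q_def[symmetric] using assms
    by (simp add: power_divide)
  also have "(x/y)^k = exp (real k * ln (x/y))" using assms
    by (simp add: exp_of_nat_mult[symmetric] ln_realpow[symmetric] del: exp_of_nat_mult)
  also have "((1-x)/(1-y))^(q-k) = exp (real (q-k) * ln ((1-x)/(1-y)))" using assms
    by (simp add: ln_realpow[symmetric])
  finally show ?thesis unfolding k_def[symmetric] q_def[symmetric] using le
    by (simp add: exp_add of_nat_diff)
qed

lemma geo_bound:
  fixes r :: real
  assumes "0 < r" "r \<le> 1/3" "finite S" "S \<subseteq> {a..b}"
  shows "(\<Sum>j\<in>S. r^j) \<le> 3/2 * r^a"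
proof -
  have "(\<Sum>j\<in>S. r^j) \<le> (\<Sum>j\<in>{a..b}. r^j)"
    using assms by (intro sum_mono2) auto
  also have "\<dots> \<le> 3/2 * r^a"
  proof (cases "a \<le> b")
    case True
    have "(1 - r) * (\<Sum>j\<in>{a..b}. r^j) = r^a - r^Suc b" using sum_gp_multiplied[OF True] .
    also have "\<dots> \<le> r^a" using assms by simp
    finally have "(1 - r) * (\<Sum>j\<in>{a..b}. r^j) \<le> r^a" .
    moreover have "(\<Sum>j\<in>{a..b}. r^j) \<ge> 0" using assms by (intro sum_nonneg) auto
    moreover have "r^a \<ge> 0" using assms by simp
    moreover have "2/3 * (\<Sum>j\<in>{a..b}. r^j) \<le> (1 - r) * (\<Sum>j\<in>{a..b}. r^j)"
      using assms calculation by (intro mult_right_mono) auto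
    ultimately show ?thesis by linarith
  next
    case False
    then show ?thesis using assms by simp
  qed
  finally show ?thesis .
qed


lemma powr_neg_nat: "(\<eta>::real) > 0 \<Longrightarrow> \<eta> powr (- real j) = (1/\<eta>)^j"
  by (simp add: powr_minus powr_realpow power_one_over inverse_eq_divide)

definition Asum :: "real \<Rightarrow> nat \<Rightarrow> real" where
  "Asum \<eta> l = (\<Sum>j\<in>{j. odd j \<and> 1 \<le> j \<and> j \<le> l}. (1/\<eta>)^j)"

lemma SA_elem:
  assumes "\<eta> \<ge> 24" "x \<in> SA \<eta> L l"
  obtains B where "x = 1/2 + 2 * Asum \<eta> l + 2 * B"
    "0 \<le> B" "B \<le> 3/2 * (1/\<eta>)^(l+1)"
proof -
  have e0: "\<eta> > 0" using assms by simp
  obtain X where x: "x = 1/2 + 2 * (\<Sum>j\<in>{j. odd j \<and> 1 \<le> j \<and> j \<le> l}. \<eta> powr (- real j))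
      + 2 * (\<Sum>j\<in>{j. odd j \<and> l < j \<and> j \<le> L}. (if X j then 1 else 0) * \<eta> powr (- real j))"
    using assms(2) unfolding SA_def by blast
  define F where "F = {j. odd j \<and> l < j \<and> j \<le> L}"
  define B where "B = (\<Sum>j\<in>F. (if X j then 1 else 0) * (1/\<eta>)^j)"
  have fF: "finite F" unfolding F_def by (rule finite_subset[of _ "{..L}"]) auto
  have "x = 1/2 + 2 * Asum \<eta> l + 2 * B"
    unfolding x B_def F_def Asum_def using e0 by (simp add: powr_neg_nat)
  moreover have "0 \<le> B" unfolding B_def using e0 by (intro sum_nonneg) auto
  moreover have "B \<le> 3/2 * (1/\<eta>)^(l+1)"
  proof -
    have "B \<le> (\<Sum>j\<in>F. (1/\<eta>)^j)" unfolding B_def using e0 by (intro sum_mono) auto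
    also have "\<dots> \<le> 3/2 * (1/\<eta>)^(l+1)"
      using e0 assms fF by (intro geo_bound[where b = L]) (auto simp: F_def)
    finally show ?thesis .
  qed
  ultimately show ?thesis by (rule that)
qed

lemma SA_props:
  assumes "\<eta> \<ge> 24" "x \<in> SA \<eta> L l" "y \<in> SA \<eta> L l"
  shows "1/2 \<le> x" "x \<le> 3/4" "\<bar>x - y\<bar> \<le> 3 * (1/\<eta>)^(l+1)"
proof -
  have e0: "\<eta> > 0" using assms by simp
  define A where "A = Asum \<eta> l"
  have A0: "A \<ge> 0" unfolding A_def Asum_def using e0 by (intro sum_nonneg) auto
  have "A \<le> 3/2 * (1/\<eta>)^1" unfolding A_def Asum_def
    using e0 assms by (intro geo_bound[where b = l]) auto
  then have A1: "A \<le> 3/2 / \<eta>" by simp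
  have pw: "(1/\<eta>)^(l+1) \<le> 1/\<eta>" using e0 assms
    using power_decreasing[of 1 "l+1" "1/\<eta>"] by simp
  have inv: "1/\<eta> \<le> 1/24" using assms by (simp add: frac_le)
  obtain B where B: "x = 1/2 + 2 * A + 2 * B" "0 \<le> B" "B \<le> 3/2 * (1/\<eta>)^(l+1)"
    using SA_elem[OF assms(1,2)] unfolding A_def by blast
  obtain C where C: "y = 1/2 + 2 * A + 2 * C" "0 \<le> C" "C \<le> 3/2 * (1/\<eta>)^(l+1)"
    using SA_elem[OF assms(1,3)] unfolding A_def by blast
  show "1/2 \<le> x" using B A0 by linarith
  show "x \<le> 3/4" using B A1 pw inv by linarith
  show "\<bar>x - y\<bar> \<le> 3 * (1/\<eta>)^(l+1)" using B C by linarith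
qed



lemma prob_bind_le:
  fixes c :: real
  assumes "\<And>\<mu>. \<mu> \<in> set_pmf \<sigma> \<Longrightarrow> measure_pmf.prob (f \<mu>) A \<le> c" "c \<ge> 0"
  shows "measure_pmf.prob (bind_pmf \<sigma> f) A \<le> c"
proof -
  have "emeasure (measure_pmf (bind_pmf \<sigma> f)) A = (\<integral>\<^sup>+\<mu>. emeasure (f \<mu>) A \<partial>\<sigma>)" by simp
  also have "\<dots> \<le> (\<integral>\<^sup>+\<mu>. ennreal c \<partial>\<sigma>)"
    by (intro nn_integral_mono_AE AE_pmfI) (use assms in \<open>simp add: measure_pmf.emeasure_eq_measure\<close>)
  also have "\<dots> = ennreal c" by (simp add: measure_pmf.emeasure_space_1)
  finally show ?thesis by (simp add: measure_pmf.emeasure_eq_measure assms)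
qed

lemma good_theta:
  fixes \<eta> :: real
  assumes e: "\<eta> \<ge> 24" and xS: "x \<in> SA \<eta> L l" and yS: "y \<in> SA \<eta> L l" and mS: "\<mu> \<in> SA \<eta> L l"
    and q: "real (length \<theta>) \<le> \<eta>^(2*l) / (128 * \<eta>)"
    and dev: "\<bar>real (length (filter id \<theta>)) - real (length \<theta>) * \<mu>\<bar> \<le> \<eta>^l / 9"
  shows "pcond \<theta> x / pcond \<theta> y \<in> {exp (- 4 / \<eta>) .. exp (4 / \<eta>)}"
proof -
  define k where "k = length (filter id \<theta>)"
  define q where "q = length \<theta>"
  define w where "w = \<eta>^l"
  have e0: "\<eta> > 0" using e by simp
  have w0: "w > 0" unfolding w_def using e0 by simp
  define D where "D = 3 * (1/\<eta>)^(l+1)"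
  have Dw: "D = 3 / (\<eta> * w)" unfolding D_def w_def by (simp add: power_one_over)
  have x1: "1/2 \<le> x" "x \<le> 3/4" using SA_props[OF e xS yS] by auto
  have y1: "1/2 \<le> y" "y \<le> 3/4" using SA_props[OF e yS xS] by auto
  have m1: "1/2 \<le> \<mu>" "\<mu> \<le> 3/4" using SA_props[OF e mS xS] by auto
  have c: "\<bar>real k * ln (x/y) + (real q - real k) * ln ((1-x)/(1-y))\<bar> \<le> 6*D*(w/9) + 6*real q*D^2"
  proof (rule core)
    show "\<bar>x - y\<bar> \<le> D" unfolding D_def by (rule SA_props(3)[OF e xS yS])
    show "\<bar>\<mu> - y\<bar> \<le> D" unfolding D_def by (rule SA_props(3)[OF e mS yS])
    show "\<bar>\<mu> - x\<bar> \<le> D" unfolding D_def by (rule SA_props(3)[OF e mS xS])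
    show "\<bar>real k - real q * \<mu>\<bar> \<le> w/9" using dev unfolding k_def q_def w_def .
  qed (use x1 y1 m1 in auto)
  have b1: "6*D*(w/9) = 2/\<eta>" unfolding Dw using w0 e0 by (simp add: field_simps)
  have "6*real q*D^2 = 54 * real q / (\<eta>^2 * w^2)" unfolding Dw using w0 e0
    by (simp add: field_simps power2_eq_square)
  also have "\<dots> \<le> 54 * (w^2 / (128 * \<eta>)) / (\<eta>^2 * w^2)"
  proof -
    have "\<eta>^(2*l) = w^2" unfolding w_def by (metis power_mult mult.commute)
    then have "real q \<le> w^2 / (128 * \<eta>)" using q unfolding q_def by simp
    then show ?thesis using e0 w0 by (intro divide_right_mono mult_left_mono) auto
  qed
  also have "\<dots> = 54 / (128 * \<eta>^3)" using w0 e0 by (simp add: field_simps power2_eq_square power3_eq_cube)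
  also have "\<dots> \<le> 2 / \<eta>"
  proof -
    have "1 \<le> \<eta>^2" using e by (intro one_le_power) simp
    then have "\<eta> * 1 \<le> \<eta> * \<eta>^2" using e0 by (intro mult_left_mono) auto
    then have "\<eta> \<le> \<eta>^3" by (simp add: power3_eq_cube power2_eq_square)
    then have "54 / (128 * \<eta>^3) \<le> 54 / (128 * \<eta>)" using e0 by (intro divide_left_mono) auto
    also have "\<dots> \<le> 2 / \<eta>" using e0 by (simp add: field_simps)
    finally show ?thesis .
  qed
  finally have b2: "6*real q*D^2 \<le> 2/\<eta>" .
  define r where "r = real k * ln (x/y) + (real q - real k) * ln ((1-x)/(1-y))"
  have rb: "\<bar>r\<bar> \<le> 4/\<eta>" using c b1 b2 unfolding r_def by linarith
  have "pcond \<theta> x / pcond \<theta> y = exp r"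
    unfolding r_def k_def q_def using x1 y1 by (intro pcond_ratio) auto
  then show ?thesis using rb by auto
qed



lemma prob_mu:
  fixes \<eta> :: real
  assumes e: "\<eta> \<ge> 24" and mS: "\<mu> \<in> SA \<eta> L l" and q0: "q > 0"
    and q: "real q \<le> \<eta>^(2*l) / (128 * \<eta>)"
  shows "measure_pmf.prob (replicate_pmf q (bernoulli_pmf \<mu>)) {\<Theta>. \<Theta> \<notin> GA \<eta> L l} \<le> 2 * exp (- 3 * \<eta>)"
proof -
  have e0: "\<eta> > 0" using e by simp
  have m1: "1/2 \<le> \<mu>" "\<mu> \<le> 3/4" using SA_props[OF e mS mS] by auto
  have m01: "\<mu> \<in> {0..1}" using m1 by auto
  define \<epsilon> where "\<epsilon> = \<eta>^l / 9"
  define P where "P = replicate_pmf q (bernoulli_pmf \<mu>)"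
  define cnt where "cnt = (length \<circ> filter id :: bool list \<Rightarrow> nat)"
  have sub: "{\<Theta>. \<Theta> \<notin> GA \<eta> L l} \<inter> set_pmf P \<subseteq> cnt -` {k. \<epsilon> \<le> \<bar>real k - real q * \<mu>\<bar>}"
  proof
    fix \<Theta> assume a: "\<Theta> \<in> {\<Theta>. \<Theta> \<notin> GA \<eta> L l} \<inter> set_pmf P"
    then have len: "length \<Theta> = q" unfolding P_def by (simp add: set_replicate_pmf)
    show "\<Theta> \<in> cnt -` {k. \<epsilon> \<le> \<bar>real k - real q * \<mu>\<bar>}"
    proof (rule ccontr)
      assume "\<Theta> \<notin> cnt -` {k. \<epsilon> \<le> \<bar>real k - real q * \<mu>\<bar>}"
      then have dev: "\<bar>real (length (filter id \<Theta>)) - real (length \<Theta>) * \<mu>\<bar> \<le> \<eta>^l / 9"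
        unfolding cnt_def \<epsilon>_def using len by auto
      have "\<Theta> \<in> GA \<eta> L l" unfolding GA_def
        using good_theta[OF e _ _ mS _ dev] q len by auto
      then show False using a by auto
    qed
  qed
  have "measure_pmf.prob P {\<Theta>. \<Theta> \<notin> GA \<eta> L l} = measure_pmf.prob P ({\<Theta>. \<Theta> \<notin> GA \<eta> L l} \<inter> set_pmf P)"
    by (simp add: measure_Int_set_pmf)
  also have "\<dots> \<le> measure_pmf.prob P (cnt -` {k. \<epsilon> \<le> \<bar>real k - real q * \<mu>\<bar>})"
    using sub by (intro measure_pmf.finite_measure_mono) auto
  also have "\<dots> = measure_pmf.prob (map_pmf cnt P) {k. \<epsilon> \<le> \<bar>real k - real q * \<mu>\<bar>}"
    by (simp add: measure_map_pmf)
  also have "map_pmf cnt P = binomial_pmf q \<mu>"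
    unfolding cnt_def P_def using binomial_pmf_altdef[OF m01] by simp
  also have "measure_pmf.prob (binomial_pmf q \<mu>) {k. \<epsilon> \<le> \<bar>real k - real q * \<mu>\<bar>} \<le> 2 * exp (- 2 * \<epsilon>^2 / real q)"
    using q0 m01 e0 unfolding \<epsilon>_def
    by (intro binomial_distribution.prob_abs_ge) (auto simp: binomial_distribution_def)
  also have "\<dots> \<le> 2 * exp (- 3 * \<eta>)"
  proof -
    define w where "w = \<eta>^l"
    have w0: "w > 0" unfolding w_def using e0 by simp
    have "\<eta>^(2*l) = w^2" unfolding w_def by (metis power_mult mult.commute)
    then have qw: "real q \<le> w^2 / (128 * \<eta>)" using q by simp
    have qp: "real q > 0" using q0 by simp
    have "3 * \<eta> * real q \<le> 3 * \<eta> * (w^2 / (128 * \<eta>))" using qw e0 by (intro mult_left_mono) auto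
    also have "\<dots> = 3/128 * w^2" using e0 by (simp add: field_simps)
    also have "\<dots> \<le> 2 * \<epsilon>^2" unfolding \<epsilon>_def w_def[symmetric] using w0 by (simp add: power2_eq_square field_simps)
    finally have "3 * \<eta> * real q \<le> 2 * \<epsilon>^2" .
    then have "3 * \<eta> \<le> 2 * \<epsilon>^2 / real q" using qp by (simp add: field_simps)
    then have "- 2 * \<epsilon>^2 / real q \<le> - 3 * \<eta>" by simp
    then show ?thesis by simp
  qed
  finally show ?thesis unfolding P_def .
qed



theorem lemma7:
  shows "\<exists>N::nat. \<forall>n\<ge>N. \<forall>(R::nat) (l::nat) (q::nat) (\<sigma>::real pmf).
    1 \<le> R \<longrightarrow> real R \<le> ln (real n) / (24 * ln (ln (real n))) \<longrightarrow>
    l \<le> 6 * R \<longrightarrow>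
    (real n powr (1 / (2 * real (6 * R)))) ^ 3 \<le> real q \<longrightarrow>
    real q \<le> (real n powr (1 / (2 * real (6 * R)))) powr (2 * real l - 1) / 2 ^ 7 \<longrightarrow>
    set_pmf \<sigma> = SA (real n powr (1 / (2 * real (6 * R)))) (6 * R) l \<longrightarrow>
    measure_pmf.prob (bind_pmf \<sigma> (\<lambda>\<mu>. replicate_pmf q (bernoulli_pmf \<mu>)))
       {\<Theta>. \<Theta> \<notin> GA (real n powr (1 / (2 * real (6 * R)))) (6 * R) l}
      \<le> real n powr (- 10)"
proof (intro exI[of _ 243] allI impI)
  fix n :: nat and R l q :: nat and \<sigma> :: "real pmf"
  assume n: "243 \<le> n" and R1: "1 \<le> R" and RL: "real R \<le> ln (real n) / (24 * ln (ln (real n)))"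
    and q3: "(real n powr (1 / (2 * real (6 * R)))) ^ 3 \<le> real q"
    and qu: "real q \<le> (real n powr (1 / (2 * real (6 * R)))) powr (2 * real l - 1) / 2 ^ 7"
    and sup: "set_pmf \<sigma> = SA (real n powr (1 / (2 * real (6 * R)))) (6 * R) l"
  define \<eta> where "\<eta> = real n powr (1 / (2 * real (6 * R)))"
  define Ln where "Ln = ln (real n)"
  have n0: "real n > 0" using n by simp
  have "ln (243::real) = 5 * ln 3"
    using ln_realpow[of 3 5] by simp
  moreover have "ln (3::real) \<ge> 1"
    using exp_le by (subst ln_ge_iff) auto
  moreover have "ln (243::real) \<le> Ln" unfolding Ln_def using n by simp
  ultimately have L5: "Ln \<ge> 5" by linarith
  have lnL: "ln Ln > 0" using L5 by simp
  have Rp: "real R > 0" using R1 by simp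
  have "real R * (24 * ln Ln) \<le> Ln"
    using RL lnL unfolding Ln_def[symmetric] by (simp add: pos_le_divide_eq)
  then have "2 * ln Ln \<le> Ln / (12 * real R)" using Rp by (simp add: field_simps)
  moreover have "\<eta> = exp (Ln / (12 * real R))"
    unfolding \<eta>_def Ln_def powr_def using n0 by simp
  ultimately have "exp (2 * ln Ln) \<le> \<eta>" by simp
  moreover have "exp (2 * ln Ln) = Ln^2"
  proof -
    have "exp (2 * ln Ln) = exp (ln Ln) ^ 2" using exp_of_nat_mult[of 2 "ln Ln"] by simp
    also have "exp (ln Ln) = Ln" using L5 by (intro exp_ln) simp
    finally show ?thesis .
  qed
  ultimately have eL: "Ln^2 \<le> \<eta>" by simp
  have "25 \<le> Ln^2" using L5 power_mono[of 5 Ln 2] by simp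
  then have e24: "\<eta> \<ge> 24" using eL by simp
  have e0: "\<eta> > 0" using e24 by simp
  have "1 \<le> \<eta>^3" using e24 by (intro one_le_power) simp
  then have q0: "q > 0" using q3 unfolding \<eta>_def[symmetric] by simp
  have "\<eta> powr (2 * real l - 1) = \<eta>^(2*l) / \<eta>"
    using e0 by (simp add: powr_diff powr_realpow[symmetric])
  then have qq: "real q \<le> \<eta>^(2*l) / (128 * \<eta>)" using qu unfolding \<eta>_def[symmetric] by simp
  have "measure_pmf.prob (bind_pmf \<sigma> (\<lambda>\<mu>. replicate_pmf q (bernoulli_pmf \<mu>)))
       {\<Theta>. \<Theta> \<notin> GA \<eta> (6 * R) l} \<le> 2 * exp (- 3 * \<eta>)"
    using sup unfolding \<eta>_def[symmetric]
    by (intro prob_bind_le prob_mu[OF e24 _ q0 qq]) auto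
  also have "\<dots> \<le> real n powr (- 10)"
  proof -
    have "15 * Ln \<le> 3 * Ln^2" using L5 by (simp add: power2_eq_square)
    then have "ln 2 - 3 * \<eta> \<le> - 10 * Ln" using eL L5 ln_2_less_1 by linarith
    then have "exp (ln 2 - 3 * \<eta>) \<le> exp (- 10 * Ln)" by simp
    moreover have "exp (ln 2 - 3 * \<eta>) = 2 * exp (- 3 * \<eta>)" by (simp add: exp_diff exp_minus field_simps)
    moreover have "real n powr (- 10) = exp (- 10 * Ln)" unfolding Ln_def powr_def using n0 by simp
    ultimately show ?thesis by simp
  qed
  finally show "measure_pmf.prob (bind_pmf \<sigma> (\<lambda>\<mu>. replicate_pmf q (bernoulli_pmf \<mu>)))
       {\<Theta>. \<Theta> \<notin> GA (real n powr (1 / (2 * real (6 * R)))) (6 * R) l}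
      \<le> real n powr (- 10)" unfolding \<eta>_def .
qed


end
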